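(* For every finite graph $G$ with at least one vertex there exists an Eulerian subgraph $G'$ of $G$ such that $$\frac{|E(G')|}{|V(G')|}\ \ge\ \frac{|E(G)|+1}{|V(G)|}-1.$$
   Context: A graph is Eulerian if it is connected and every vertex has even degree (a single vertex with no edges counts as Eulerian). *)

theory Defs
  imports Complex_Main
begin

definition graph :: "'a set \<Rightarrow> 'a set set \<Rightarrow> bool" where
  "graph V E \<longleftrightarrow> finite V \<and> (\<forall>e\<in>E. e \<subseteq> V \<and> card e = 2)"

definition subgraph :: "'a set \<Rightarrow> 'a set set \<Rightarrow> 'a set \<Rightarrow> 'a set set \<Rightarrow> bool" where
  "subgraph V' E' V E \<longleftrightarrow> graph V' E' \<and> V' \<subseteq> V \<and> E' \<subseteq> E"

definition degree :: "'a set set \<Rightarrow> 'a \<Rightarrow> nat" where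
  "degree E v = card {e\<in>E. v \<in> e}"

definition adj :: "'a set set \<Rightarrow> 'a \<Rightarrow> 'a \<Rightarrow> bool" where
  "adj E u v \<longleftrightarrow> {u, v} \<in> E"

definition connected_graph :: "'a set \<Rightarrow> 'a set set \<Rightarrow> bool" where
  "connected_graph V E \<longleftrightarrow> V \<noteq> {} \<and> (\<forall>u\<in>V. \<forall>v\<in>V. (adj E)\<^sup>*\<^sup>* u v)"

text \<open>Eulerian: connected and every vertex has even degree (a single vertex counts).\<close>
definition eulerian :: "'a set \<Rightarrow> 'a set set \<Rightarrow> bool" where
  "eulerian V E \<longleftrightarrow> connected_graph V E \<and> (\<forall>v\<in>V. even (degree E v))"

end

theory Submission
  imports Defs
begin

lemma degree_Un_disj:
  assumes "finite S" "finite T" "S \<inter> T = {}"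
  shows "degree (S \<union> T) v = degree S v + degree T v"
proof -
  have "{e\<in>S \<union> T. v \<in> e} = {e\<in>S. v\<in>e} \<union> {e\<in>T. v\<in>e}" by auto
  moreover have "card ({e\<in>S. v\<in>e} \<union> {e\<in>T. v\<in>e}) = card {e\<in>S. v\<in>e} + card {e\<in>T. v\<in>e}"
    by (rule card_Un_disjoint) (use assms in auto)
  ultimately show ?thesis unfolding degree_def by simp
qed

lemma degree_symdiff:
  assumes "finite S" "finite T"
  shows "even (degree ((S - T) \<union> (T - S)) v) \<longleftrightarrow> (even (degree S v) \<longleftrightarrow> even (degree T v))"
proof -
  have a: "degree ((S - T) \<union> (S \<inter> T)) v = degree (S - T) v + degree (S \<inter> T) v"
    by (rule degree_Un_disj) (use assms in auto)
  have b: "degree ((T - S) \<union> (S \<inter> T)) v = degree (T - S) v + degree (S \<inter> T) v"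
    by (rule degree_Un_disj) (use assms in auto)
  have c: "degree ((S - T) \<union> (T - S)) v = degree (S - T) v + degree (T - S) v"
    by (rule degree_Un_disj) (use assms in auto)
  have "(S - T) \<union> (S \<inter> T) = S" "(T - S) \<union> (S \<inter> T) = T" by auto
  then show ?thesis using a b c by auto
qed

lemma handshake:
  assumes "finite V" "finite S" "\<forall>e\<in>S. e \<subseteq> V \<and> card e = 2"
  shows "(\<Sum>v\<in>V. degree S v) = 2 * card S"
proof -
  have "(\<Sum>v\<in>V. degree S v) = (\<Sum>v\<in>V. \<Sum>e\<in>S. if v \<in> e then 1 else (0::nat))"
  proof (rule sum.cong)
    fix v
    have "(\<Sum>e\<in>S. if v \<in> e then 1 else (0::nat)) = card (S \<inter> {e. v \<in> e})"
      using assms(2) by (simp add: sum.If_cases)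
    then show "degree S v = (\<Sum>e\<in>S. if v \<in> e then 1 else (0::nat))"
      unfolding degree_def by (simp add: Int_def conj_commute)
  qed simp
  also have "\<dots> = (\<Sum>e\<in>S. \<Sum>v\<in>V. if v \<in> e then 1 else (0::nat))" by (rule sum.swap)
  also have "\<dots> = (\<Sum>e\<in>S. 2)"
  proof (rule sum.cong)
    fix e assume e: "e \<in> S"
    have "(\<Sum>v\<in>V. if v \<in> e then 1 else (0::nat)) = card (V \<inter> {v. v \<in> e})"
      using assms(1) by (simp add: sum.If_cases)
    also have "V \<inter> {v. v \<in> e} = e" using e assms(3) by auto
    finally show "(\<Sum>v\<in>V. if v \<in> e then 1 else (0::nat)) = 2" using e assms(3) by simp
  qed simp
  finally show ?thesis by simp
qed

lemma even_sum_iff: "finite A \<Longrightarrow> even (\<Sum>v\<in>A. f v :: nat) \<longleftrightarrow> even (card {v\<in>A. odd (f v)})"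
proof (induction A rule: finite_induct)
  case empty then show ?case by simp
next
  case (insert x A)
  have "{v\<in>insert x A. odd (f v)} = (if odd (f x) then insert x {v\<in>A. odd (f v)} else {v\<in>A. odd (f v)})" by auto
  then show ?case using insert by auto
qed

lemma forest_bound:
  assumes "finite V" "V \<noteq> {}" "finite R" "\<forall>e\<in>R. e \<subseteq> V \<and> card e = 2"
    and noeven: "\<And>C. C \<subseteq> R \<Longrightarrow> \<forall>v\<in>V. even (degree C v) \<Longrightarrow> C = {}"
  shows "card R + 1 \<le> card V"
proof -
  obtain v0 where v0: "v0 \<in> V" using assms by auto
  define oddset where "oddset S = {v\<in>V. odd (degree S v)}" for S
  define psi where "psi S = oddset S - {v0}" for S
  have evod: "even (card (oddset S))" if "S \<subseteq> R" for S
  proof -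
    have "(\<Sum>v\<in>V. degree S v) = 2 * card S"
    proof (rule handshake)
      show "finite S" using that assms(3) by (rule finite_subset)
    qed (use assms that in auto)
    then show ?thesis unfolding oddset_def using even_sum_iff[OF assms(1), of "degree S"] by simp
  qed
  have inj: "inj_on psi (Pow R)"
  proof (rule inj_onI)
    fix S T assume S: "S \<in> Pow R" and T: "T \<in> Pow R" and eq: "psi S = psi T"
    have fS: "finite S" "finite T" using S T assms(3) finite_subset by auto
    have odeq: "oddset S = oddset T"
    proof (rule ccontr)
      assume ne: "oddset S \<noteq> oddset T"
      have "oddset S - {v0} = oddset T - {v0}" using eq psi_def by simp
      then have "(v0 \<notin> oddset T \<and> oddset S = insert v0 (oddset T)) \<or> (v0 \<notin> oddset S \<and> oddset T = insert v0 (oddset S))" using ne by blast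
      moreover have "finite (oddset S)" "finite (oddset T)" using assms(1) oddset_def by auto
      moreover have "even (card (oddset S))" "even (card (oddset T))" using evod S T by auto
      ultimately show False by (metis card_insert_disjoint even_Suc)
    qed
    let ?C = "(S - T) \<union> (T - S)"
    have "?C \<subseteq> R" using S T by auto
    moreover have "\<forall>v\<in>V. even (degree ?C v)"
    proof
      fix v assume "v \<in> V"
      then have "odd (degree S v) \<longleftrightarrow> odd (degree T v)" using odeq oddset_def by blast
      then show "even (degree ?C v)" using degree_symdiff[OF fS] by simp
    qed
    ultimately have "?C = {}" by (rule noeven)
    then show "S = T" by blast
  qed
  have "psi ` Pow R \<subseteq> Pow (V - {v0})" unfolding psi_def oddset_def by auto
  then have "card (Pow R) \<le> card (Pow (V - {v0}))"
    using card_inj_on_le[OF inj] assms(1) by blast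
  then have "2 ^ card R \<le> (2::nat) ^ card (V - {v0})" using assms by (simp add: card_Pow)
  then have "card R \<le> card (V - {v0})" by simp
  then show ?thesis proof -
    have "card V > 0" using v0 assms(1) card_gt_0_iff by blast
    then show ?thesis using \<open>card R \<le> card (V - {v0})\<close> v0 assms(1) by (simp add: card_Diff_singleton)
  qed
qed

lemma big_even:
  assumes "graph V E" "V \<noteq> {}"
  shows "\<exists>H\<subseteq>E. (\<forall>v\<in>V. even (degree H v)) \<and> card E + 1 \<le> card H + card V"
proof -
  have fV: "finite V" using assms(1) graph_def by auto
  have fE: "finite E" using assms(1) fV unfolding graph_def
    by (meson Pow_iff finite_Pow_iff finite_subset subsetI)
  have EV: "\<forall>e\<in>E. e \<subseteq> V \<and> card e = 2" using assms(1) graph_def by auto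
  define Cs where "Cs = {H. H \<subseteq> E \<and> (\<forall>v\<in>V. even (degree H v))}"
  have fC: "finite Cs" unfolding Cs_def using fE by auto
  have "{} \<in> Cs" unfolding Cs_def degree_def by auto
  then have neC: "card ` Cs \<noteq> {}" by auto
  obtain H where H: "H \<in> Cs" "card H = Max (card ` Cs)"
    using Max_in[OF finite_imageI[OF fC] neC] by auto
  have Hmax: "card H' \<le> card H" if "H' \<in> Cs" for H'
    using H(2) Max_ge[OF finite_imageI[OF fC]] that by auto
  have HE: "H \<subseteq> E" "\<forall>v\<in>V. even (degree H v)" using H(1) Cs_def by auto
  have fH: "finite H" using HE fE finite_subset by auto
  have "card (E - H) + 1 \<le> card V"
  proof (rule forest_bound[OF fV assms(2)])
    show "finite (E - H)" using fE by auto
    show "\<forall>e\<in>E - H. e \<subseteq> V \<and> card e = 2" using EV by auto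
    fix C assume C: "C \<subseteq> E - H" "\<forall>v\<in>V. even (degree C v)"
    show "C = {}"
    proof (rule ccontr)
      assume Cne: "C \<noteq> {}"
      have fCC: "finite C" using C(1) fE by (meson Diff_subset finite_subset)
      have dis: "H \<inter> C = {}" using C by auto
      have "H \<union> C \<in> Cs" unfolding Cs_def using HE C degree_Un_disj[OF fH fCC dis] by auto
      then have "card (H \<union> C) \<le> card H" by (rule Hmax)
      moreover have "card (H \<union> C) = card H + card C" using card_Un_disjoint[OF fH fCC dis] .
      moreover have "card C > 0" using fCC Cne by auto
      ultimately show False by simp
    qed
  qed
  moreover have "card E = card H + card (E - H)"
    using card_Diff_subset[OF fH HE(1)] card_mono[OF fE HE(1)] by simp
  ultimately show ?thesis using HE by (intro exI[of _ H]) auto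
qed

lemma adj_sym: "adj H a b \<Longrightarrow> adj H b a" unfolding adj_def by (simp add: insert_commute)

lemma rtc_sym: "(adj H)\<^sup>*\<^sup>* a b \<Longrightarrow> (adj H)\<^sup>*\<^sup>* b a"
proof (induction rule: rtranclp_induct)
  case base then show ?case by simp
next
  case (step y z)
  then show ?case using adj_sym[OF step(2)] by (metis converse_rtranclp_into_rtranclp)
qed

lemma mediant:
  fixes a b p q x y :: real
  assumes "p > 0" "q > 0" "a / p \<le> x" "b / q \<le> y"
  shows "(a + b) / (p + q) \<le> max x y"
proof -
  have "a \<le> x * p" "b \<le> y * q" using assms by (auto simp: pos_divide_le_eq)
  moreover have "x * p \<le> max x y * p" "y * q \<le> max x y * q" using assms
    by (auto intro: mult_right_mono)
  ultimately have "a + b \<le> max x y * (p + q)" by (simp add: distrib_left)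
  then show ?thesis using assms by (simp add: pos_divide_le_eq)
qed


lemma card2_finite: "card e = 2 \<Longrightarrow> finite e"
  by (rule ccontr) simp

lemma comp:
  "finite H \<Longrightarrow> \<forall>e\<in>H. card e = 2 \<Longrightarrow> H \<noteq> {} \<Longrightarrow> \<forall>v. even (degree H v) \<Longrightarrow>
   \<exists>E'. E' \<subseteq> H \<and> E' \<noteq> {} \<and> eulerian (\<Union>E') E' \<and>
        real (card H) / real (card (\<Union>H)) \<le> real (card E') / real (card (\<Union>E'))"
proof (induction "card H" arbitrary: H rule: less_induct)
  case less
  obtain e0 where e0: "e0 \<in> H" using less.prems by auto
  have "card e0 = 2" using less.prems(2) e0 by auto
  then obtain a b where ab: "e0 = {a,b}" "a \<noteq> b" unfolding card_2_iff by blast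
  define V1 where "V1 = {w. (adj H)\<^sup>*\<^sup>* a w}"
  define E1 where "E1 = {e\<in>H. e \<subseteq> V1}"
  define H2 where "H2 = H - E1"
  have closed: "e \<subseteq> V1" if "e \<in> H" "x \<in> e" "x \<in> V1" for e x
  proof -
    have "card e = 2" using less.prems(2) that(1) by auto
    then obtain p q where pq: "e = {p,q}" unfolding card_2_iff by blast
    have "adj H p q" "adj H q p" using that pq unfolding adj_def by (auto simp: insert_commute)
    moreover have "(adj H)\<^sup>*\<^sup>* a x" using that(3) unfolding V1_def by simp
    ultimately have "(adj H)\<^sup>*\<^sup>* a p \<and> (adj H)\<^sup>*\<^sup>* a q"
      using that(2) pq by (auto intro: rtranclp.rtrancl_into_rtrancl)
    then show ?thesis using pq unfolding V1_def by auto
  qed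
  have aV1: "a \<in> V1" unfolding V1_def by simp
  have e0E1: "e0 \<in> E1" using closed[OF e0, of a] ab aV1 e0 unfolding E1_def by auto
  have fH: "finite E1" "finite H2" using less.prems(1) E1_def H2_def by auto
  have degE1: "degree E1 v = (if v \<in> V1 then degree H v else 0)" for v
  proof (cases "v \<in> V1")
    case True
    then have "{e\<in>E1. v\<in>e} = {e\<in>H. v\<in>e}" using closed unfolding E1_def by auto
    then show ?thesis using True unfolding degree_def by simp
  next
    case False
    then have "{e\<in>E1. v\<in>e} = {}" unfolding E1_def by auto
    then show ?thesis using False unfolding degree_def by (metis card.empty)
  qed
  have evE1: "\<forall>v. even (degree E1 v)" using degE1 less.prems(4) by simp
  have HU: "H = E1 \<union> H2" "E1 \<inter> H2 = {}" unfolding H2_def E1_def by auto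
  have evH2: "\<forall>v. even (degree H2 v)"
  proof
    fix v
    have "degree H v = degree E1 v + degree H2 v" using degree_Un_disj[OF fH HU(2)] HU(1) by simp
    then show "even (degree H2 v)" using evE1 less.prems(4) by (metis even_add)
  qed
  have fin: "finite (\<Union>G)" if "G \<subseteq> H" for G
    using that less.prems(1,2) card2_finite by (meson finite_Union finite_subset subsetD)
  have Upos: "card (\<Union>G) > 0" if G: "G \<subseteq> H" "G \<noteq> {}" for G
  proof -
    obtain e where e: "e \<in> G" using G(2) by auto
    then have "card e = 2" using G(1) less.prems(2) by auto
    then have "e \<subseteq> \<Union>G" "e \<noteq> {}" using e by auto
    then show ?thesis using fin[OF G(1)] by (auto simp: card_gt_0_iff)
  qed
  show ?case
  proof (cases "H2 = {}")
    case True
    then have HE1: "H = E1" using HU by auto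
    have conn: "connected_graph (\<Union>H) H"
      unfolding connected_graph_def
    proof (intro conjI ballI)
      have "a \<in> \<Union>H" using e0 ab by auto
      then show "\<Union>H \<noteq> {}" by blast
      fix x y assume "x \<in> \<Union>H" "y \<in> \<Union>H"
      then have "x \<in> V1" "y \<in> V1" using HE1 unfolding E1_def by auto
      then have "(adj H)\<^sup>*\<^sup>* a x" "(adj H)\<^sup>*\<^sup>* a y" unfolding V1_def by auto
      then show "(adj H)\<^sup>*\<^sup>* x y" using rtc_sym[of H a x] rtranclp_trans by metis
    qed
    have "eulerian (\<Union>H) H" unfolding eulerian_def using conn less.prems(4) by auto
    then show ?thesis using less.prems(3) by blast
  next
    case False
    have s1: "E1 \<subseteq> H" "H2 \<subseteq> H" using HU by auto
    have lt1: "card E1 < card H"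
    proof (rule psubset_card_mono[OF less.prems(1)])
      show "E1 \<subset> H" using False HU by blast
    qed
    have lt2: "card H2 < card H"
    proof (rule psubset_card_mono[OF less.prems(1)])
      show "H2 \<subset> H" using e0E1 HU by blast
    qed
    have c1: "\<forall>e\<in>E1. card e = 2" "\<forall>e\<in>H2. card e = 2" using s1 less.prems(2) by auto
    obtain E'1 where E'1: "E'1 \<subseteq> E1" "E'1 \<noteq> {}" "eulerian (\<Union>E'1) E'1"
      "real (card E1) / real (card (\<Union>E1)) \<le> real (card E'1) / real (card (\<Union>E'1))"
      using less.hyps[OF lt1 fH(1) c1(1) _ evE1] e0E1 by blast
    obtain E'2 where E'2: "E'2 \<subseteq> H2" "E'2 \<noteq> {}" "eulerian (\<Union>E'2) E'2"
      "real (card H2) / real (card (\<Union>H2)) \<le> real (card E'2) / real (card (\<Union>E'2))"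
      using less.hyps[OF lt2 fH(2) c1(2) False evH2] by blast
    have disj: "\<Union>E1 \<inter> \<Union>H2 = {}"
    proof -
      have "\<Union>E1 \<subseteq> V1" unfolding E1_def by auto
      moreover have "\<Union>H2 \<inter> V1 = {}" using closed unfolding H2_def E1_def by blast
      ultimately show ?thesis by blast
    qed
    have UU: "\<Union>H = \<Union>E1 \<union> \<Union>H2" using HU by auto
    have cU: "card (\<Union>H) = card (\<Union>E1) + card (\<Union>H2)"
      unfolding UU by (rule card_Un_disjoint[OF fin[OF s1(1)] fin[OF s1(2)] disj])
    have cH: "card H = card E1 + card H2" using HU fH by (simp add: card_Un_disjoint)
    have p1: "card (\<Union>E1) > 0" using Upos[OF s1(1)] e0E1 by auto
    have p2: "card (\<Union>H2) > 0" using Upos[OF s1(2) False] .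
    have "real (card H) / real (card (\<Union>H)) \<le>
      max (real (card E'1) / real (card (\<Union>E'1))) (real (card E'2) / real (card (\<Union>E'2)))"
      using mediant[of "real (card (\<Union>E1))" "real (card (\<Union>H2))" "real (card E1)" _ "real (card H2)", OF _ _ E'1(4) E'2(4)]
        p1 p2 cU cH by simp
    then show ?thesis
    proof (cases "real (card E'1) / real (card (\<Union>E'1)) \<le> real (card E'2) / real (card (\<Union>E'2))")
      case True
      then show ?thesis using E'2 s1 \<open>real (card H) / real (card (\<Union>H)) \<le> _\<close>
        by (intro exI[of _ E'2]) (auto simp: max_def)
    next
      case False
      then show ?thesis using E'1 s1 \<open>real (card H) / real (card (\<Union>H)) \<le> _\<close>
        by (intro exI[of _ E'1]) (auto simp: max_def)
    qed
  qed
qed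

theorem lemma3p3:
  fixes V :: "'a set" and E :: "'a set set"
  assumes "graph V E" and "V \<noteq> {}"
  shows "\<exists>V' E'. subgraph V' E' V E \<and> eulerian V' E' \<and>
           real (card E') / real (card V') \<ge> (real (card E) + 1) / real (card V) - 1"
proof -
  have fV: "finite V" using assms(1) graph_def by auto
  have fE: "finite E" using assms(1) fV unfolding graph_def
    by (meson Pow_iff finite_Pow_iff finite_subset subsetI)
  have EV: "\<forall>e\<in>E. e \<subseteq> V \<and> card e = 2" using assms(1) graph_def by auto
  have npos: "card V > 0" using fV assms(2) by (simp add: card_gt_0_iff)
  show ?thesis
  proof (cases "card E + 1 \<le> card V")
    case True
    obtain v where v: "v \<in> V" using assms(2) by auto
    have "subgraph {v} {} V E" using v unfolding subgraph_def graph_def by auto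
    moreover have "eulerian {v} {}" unfolding eulerian_def connected_graph_def degree_def by auto
    moreover have "(real (card E) + 1) / real (card V) \<le> 1"
      using True npos by (simp add: divide_le_eq)
    ultimately show ?thesis by (intro exI[of _ "{v}"] exI[of _ "{}"]) auto
  next
    case False
    obtain H where H: "H \<subseteq> E" "\<forall>v\<in>V. even (degree H v)" "card E + 1 \<le> card H + card V"
      using big_even[OF assms] by blast
    have Hne: "H \<noteq> {}" using False H(3) by auto
    have fH: "finite H" using fE H(1) finite_subset by auto
    have c2: "\<forall>e\<in>H. card e = 2" and HV: "\<forall>e\<in>H. e \<subseteq> V" using H(1) EV by auto
    have evall: "\<forall>v. even (degree H v)"
    proof
      fix v show "even (degree H v)"
      proof (cases "v \<in> V")
        case True then show ?thesis using H(2) by auto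
      next
        case False then have "{e\<in>H. v\<in>e} = {}" using HV by auto
        then have "degree H v = 0" unfolding degree_def by (metis card.empty)
        then show ?thesis by simp
      qed
    qed
    obtain E' where E': "E' \<subseteq> H" "E' \<noteq> {}" "eulerian (\<Union>E') E'"
      "real (card H) / real (card (\<Union>H)) \<le> real (card E') / real (card (\<Union>E'))"
      using comp[OF fH c2 Hne evall] by blast
    have sub: "subgraph (\<Union>E') E' V E" unfolding subgraph_def graph_def
    proof (intro conjI)
      show "finite (\<Union>E')" using E'(1) fH c2 card2_finite by (meson finite_Union finite_subset subsetD)
    qed (use E'(1) H(1) c2 HV in auto)
    have UHV: "\<Union>H \<subseteq> V" using HV by auto
    have cUH: "card (\<Union>H) \<le> card V" using card_mono[OF fV UHV] .
    have cUHpos: "card (\<Union>H) > 0"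
    proof -
      obtain e where e: "e \<in> H" using Hne by auto
      then have "e \<subseteq> \<Union>H" "e \<noteq> {}" using c2 by auto
      moreover have "finite (\<Union>H)" using UHV fV finite_subset by auto
      ultimately show ?thesis by (auto simp: card_gt_0_iff)
    qed
    have r1: "(real (card E) + 1) / real (card V) - 1 = (real (card E) + 1 - real (card V)) / real (card V)"
      using npos by (simp add: field_simps)
    have "(real (card E) + 1 - real (card V)) / real (card V) \<le> real (card H) / real (card V)"
      using H(3) npos by (intro divide_right_mono) auto
    also have "\<dots> \<le> real (card H) / real (card (\<Union>H))"
      using cUH cUHpos by (intro divide_left_mono) auto
    finally have "(real (card E) + 1) / real (card V) - 1 \<le> real (card E') / real (card (\<Union>E'))"
      using r1 E'(4) by linarith
    with sub E'(3) have "subgraph (\<Union>E') E' V E \<and> eulerian (\<Union>E') E' \<and>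
        real (card E') / real (card (\<Union>E')) \<ge> (real (card E) + 1) / real (card V) - 1" by simp
    then show ?thesis by (rule exI[of _ "\<Union>E'", OF exI[of _ E']])
  qed
qed

end
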